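(* Let $0\leq\epsilon<\frac{\pi}{4}$ and let $Q_\epsilon$ be the hyperbolic quadrilateral with all four sides of equal length and consecutive interior angles $\frac{\pi}{4}-\epsilon,\ \frac{\pi}{4}+\epsilon,\ \frac{\pi}{4}-\epsilon,\ \frac{\pi}{4}+\epsilon$. Then for each pair of opposite sides of $Q_\epsilon$, the common perpendicular between them passes through the intersection point of the two diagonals of $Q_\epsilon$, and both common perpendiculars have the same length $d$, where $\cosh d=\sqrt{2}\cos\epsilon+1$.
   Context: Work in the hyperbolic plane $\mathbb{H}^2$ (curvature $-1$). Such a quadrilateral $Q_\epsilon$ exists and is unique up to isometry. *)

theory Defs
  imports "HOL-Analysis.Analysis"
begin

text \<open>Hyperboloid model of the hyperbolic plane (curvature -1) in R^(1,2).
  A point is a triple (x0, x1, x2); Minkowski form -x0 y0 + x1 y1 + x2 y2.\<close>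

type_synonym pt = "real \<times> real \<times> real"

definition mink :: "pt \<Rightarrow> pt \<Rightarrow> real" where
  "mink x y = - fst x * fst y + fst (snd x) * fst (snd y) + snd (snd x) * snd (snd y)"

definition hplane :: "pt set" where
  "hplane = {x. mink x x = -1 \<and> fst x > 0}"

definition hdist :: "pt \<Rightarrow> pt \<Rightarrow> real" where
  "hdist x y = arcosh (- mink x y)"

definition hline :: "pt \<Rightarrow> pt \<Rightarrow> pt set" where
  "hline A B = {X \<in> hplane. \<exists>a b. X = a *\<^sub>R A + b *\<^sub>R B}"

definition hseg :: "pt \<Rightarrow> pt \<Rightarrow> pt set" where
  "hseg A B = {X \<in> hplane. \<exists>a b. a \<ge> 0 \<and> b \<ge> 0 \<and> X = a *\<^sub>R A + b *\<^sub>R B}"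

text \<open>Initial tangent vector at p of the geodesic from p to q (projection of q
  to the tangent space at p).\<close>
definition tangent :: "pt \<Rightarrow> pt \<Rightarrow> pt" where
  "tangent p q = q + mink p q *\<^sub>R p"

definition hangle :: "pt \<Rightarrow> pt \<Rightarrow> pt \<Rightarrow> real" where
  "hangle p q r = arccos (mink (tangent p q) (tangent p r) /
      (sqrt (mink (tangent p q) (tangent p q)) * sqrt (mink (tangent p r) (tangent p r))))"

definition noncollinear :: "pt \<Rightarrow> pt \<Rightarrow> pt \<Rightarrow> bool" where
  "noncollinear P Q R \<longleftrightarrow> P \<in> hplane \<and> Q \<in> hplane \<and> R \<in> hplane \<and> P \<noteq> Q \<and> R \<notin> hline P Q"

definition convex_quad :: "pt \<Rightarrow> pt \<Rightarrow> pt \<Rightarrow> pt \<Rightarrow> bool" where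
  "convex_quad A B C D \<longleftrightarrow>
     noncollinear A B C \<and> noncollinear B C D \<and> noncollinear C D A \<and> noncollinear D A B \<and>
     hseg A C \<inter> hseg B D \<noteq> {}"

definition perp_at :: "pt \<Rightarrow> pt \<Rightarrow> pt \<Rightarrow> pt \<Rightarrow> bool" where
  "perp_at P Q A B \<longleftrightarrow> P \<in> hline A B \<and>
     (\<forall>X \<in> hline A B. mink (tangent P Q) (tangent P X) = 0)"

definition common_perp :: "pt \<Rightarrow> pt \<Rightarrow> pt \<Rightarrow> pt \<Rightarrow> pt \<Rightarrow> pt \<Rightarrow> bool" where
  "common_perp A B C D P Q \<longleftrightarrow> Q \<in> hplane \<and> P \<noteq> Q \<and> perp_at P Q A B \<and> perp_at Q P C D"

end

theory Submission
  imports Defs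
begin


lemma mink_sym: "mink x y = mink y x"
  unfolding mink_def by (simp add: algebra_simps)
lemma mink_add_left[simp]: "mink (x + y) z = mink x z + mink y z"
  unfolding mink_def by (simp add: algebra_simps)
lemma mink_add_right[simp]: "mink z (x + y) = mink z x + mink z y"
  unfolding mink_def by (simp add: algebra_simps)
lemma mink_diff_left[simp]: "mink (x - y) z = mink x z - mink y z"
  unfolding mink_def by (simp add: algebra_simps)
lemma mink_diff_right[simp]: "mink z (x - y) = mink z x - mink z y"
  unfolding mink_def by (simp add: algebra_simps)
lemma mink_scale_left[simp]: "mink (a *\<^sub>R x) z = a * mink x z"
  unfolding mink_def by (simp add: algebra_simps)
lemma mink_scale_right[simp]: "mink z (a *\<^sub>R x) = a * mink z x"
  unfolding mink_def by (simp add: algebra_simps)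
lemma mink_neg_left[simp]: "mink (- x) z = - mink x z"
  unfolding mink_def by (simp add: algebra_simps)
lemma mink_neg_right[simp]: "mink z (- x) = - mink z x"
  unfolding mink_def by (simp add: algebra_simps)

lemma hplane_rcs:
  assumes "X \<in> hplane" "Y \<in> hplane"
  shows "mink X Y \<le> -1"
proof -
  obtain x0 x1 x2 where X: "X = (x0,x1,x2)" by (cases X) auto
  obtain y0 y1 y2 where Y: "Y = (y0,y1,y2)" by (cases Y) auto
  have hx: "x0^2 = 1 + x1^2 + x2^2" "x0 > 0" using assms(1) X by (auto simp: hplane_def mink_def power2_eq_square)
  have hy: "y0^2 = 1 + y1^2 + y2^2" "y0 > 0" using assms(2) Y by (auto simp: hplane_def mink_def power2_eq_square)
  have e1: "(x0*y0)^2 = (1 + x1^2 + x2^2)*(1 + y1^2 + y2^2)" using hx hy by (simp add: power_mult_distrib)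
  have e2: "(1 + x1^2 + x2^2)*(1 + y1^2 + y2^2) - (1 + x1*y1 + x2*y2)^2 = (x1-y1)^2 + (x2-y2)^2 + (x1*y2 - x2*y1)^2"
    by (simp add: power2_eq_square algebra_simps)
  have "0 \<le> (x1-y1)^2 + (x2-y2)^2 + (x1*y2 - x2*y1)^2" by simp
  hence sq: "(1 + x1*y1 + x2*y2)^2 \<le> (x0*y0)^2" using e1 e2 by linarith
  have "x0*y0 \<ge> 0" using hx hy by simp
  have "\<bar>1 + x1*y1 + x2*y2\<bar> \<le> \<bar>x0*y0\<bar>" using sq by (simp only: abs_le_square_iff)
  hence "x0*y0 \<ge> 1 + x1*y1 + x2*y2" using \<open>x0*y0 \<ge> 0\<close> by linarith
  thus ?thesis using X Y by (simp add: mink_def)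
qed

lemma hplane_eq:
  assumes "X \<in> hplane" "Y \<in> hplane" "mink X Y = -1"
  shows "X = Y"
proof -
  obtain x0 x1 x2 where X: "X = (x0,x1,x2)" by (cases X) auto
  obtain y0 y1 y2 where Y: "Y = (y0,y1,y2)" by (cases Y) auto
  have hx: "x0^2 = 1 + x1^2 + x2^2" "x0 > 0" using assms(1) X by (auto simp: hplane_def mink_def power2_eq_square)
  have hy: "y0^2 = 1 + y1^2 + y2^2" "y0 > 0" using assms(2) Y by (auto simp: hplane_def mink_def power2_eq_square)
  have e: "x0*y0 = 1 + x1*y1 + x2*y2" using assms(3) X Y by (simp add: mink_def)
  have "(x0*y0)^2 = (1 + x1^2 + x2^2)*(1 + y1^2 + y2^2)" using hx hy by (simp add: power_mult_distrib)
  hence "0 = (x1-y1)^2 + (x2-y2)^2 + (x1*y2 - x2*y1)^2" using e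
    by (simp add: power2_eq_square algebra_simps)
  hence "(x1-y1)^2 = 0 \<and> (x2-y2)^2 = 0"
    using zero_le_power2[of "x1-y1"] zero_le_power2[of "x2-y2"] zero_le_power2[of "x1*y2 - x2*y1"] by linarith
  hence "x1 = y1" "x2 = y2" by simp_all
  hence "x0^2 = y0^2" using hx hy by simp
  hence "x0 = y0 \<or> x0 = -y0" by (simp only: power2_eq_iff)
  hence "x0 = y0" using hx hy by linarith
  thus ?thesis using X Y \<open>x1 = y1\<close> \<open>x2 = y2\<close> by simp
qed

lemma hplane_scale:
  assumes "X \<in> hplane" "s *\<^sub>R X \<in> hplane"
  shows "s = 1"
proof -
  have "s^2 = 1" using assms by (simp add: hplane_def power2_eq_square)
  moreover have "s > 0" using assms by (auto simp: hplane_def zero_less_mult_iff)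
  moreover from \<open>s^2 = 1\<close> have "s = 1 \<or> s = -1" by (simp add: power2_eq_1_iff)
  ultimately show ?thesis by linarith
qed



lemma tangent_P: "P \<in> hplane \<Longrightarrow> mink (tangent P Q) P = 0"
  unfolding tangent_def hplane_def by (simp add: mink_sym)

lemma perp_at_intro:
  assumes "P \<in> hline A B" "mink (tangent P Q) A = 0" "mink (tangent P Q) B = 0"
  shows "perp_at P Q A B"
  unfolding perp_at_def
proof (intro conjI ballI)
  show "P \<in> hline A B" by fact
  fix X assume "X \<in> hline A B"
  then obtain x y where X: "X = x *\<^sub>R A + y *\<^sub>R B" unfolding hline_def by auto
  have "P \<in> hplane" using assms(1) unfolding hline_def by auto
  hence "mink (tangent P Q) P = 0" by (rule tangent_P)
  thus "mink (tangent P Q) (tangent P X) = 0"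
    using assms(2,3) unfolding X tangent_def[of P "x *\<^sub>R A + y *\<^sub>R B"] by simp
qed

lemma perp_at_D:
  assumes "perp_at P Q A B" "A \<in> hplane" "B \<in> hplane"
  shows "mink (tangent P Q) A = 0" "mink (tangent P Q) B = 0"
proof -
  have P: "P \<in> hplane" using assms(1) unfolding perp_at_def hline_def by auto
  have "A = 1 *\<^sub>R A + 0 *\<^sub>R B" "B = 0 *\<^sub>R A + 1 *\<^sub>R B" by simp_all
  hence "A \<in> hline A B" "B \<in> hline A B" using assms(2,3) unfolding hline_def by blast+
  hence "mink (tangent P Q) (tangent P A) = 0" "mink (tangent P Q) (tangent P B) = 0"
    using assms(1) unfolding perp_at_def by auto
  thus "mink (tangent P Q) A = 0" "mink (tangent P Q) B = 0"
    using tangent_P[OF P, of Q] unfolding tangent_def[of P A] tangent_def[of P B] by simp_all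
qed

lemma uniq_alg:
  fixes t al be ga de w1 cu cv a b g k :: real
  assumes E1: "t*al - ga = w1*cu" and E2: "t*be - de = w1*cv"
   and E3: "(al - t*ga)*(1+2*g) = t*w1*cu" and E4: "(be - t*de)*(1+2*g) = t*w1*cv"
   and s: "a*cu + b*cv = -1 - g"
   and w: "w1 = 2*a*ga + 2*b*de" and k: "k = a*al + b*be"
   and tle: "t \<le> -1" and tne: "t \<noteq> -1" and k1: "k \<ge> 1" and gp: "g > 0"
  shows "t = -(1+2*g)" "ga = al" "de = be"
proof -
  have S1: "(1+2*g)*(1-t^2)*al = -2*g*t*w1*cu"
  proof -
    have "(1+2*g)*(1-t^2)*al + 2*g*t*w1*cu = ((al - t*ga)*(1+2*g) - t*w1*cu) + (1+2*g)*t*(w1*cu - (t*al - ga))"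
      by (simp add: algebra_simps power2_eq_square)
    also have "\<dots> = 0" using E1 E3 by simp
    finally show ?thesis by linarith
  qed
  have S2: "(1+2*g)*(1-t^2)*be = -2*g*t*w1*cv"
  proof -
    have "(1+2*g)*(1-t^2)*be + 2*g*t*w1*cv = ((be - t*de)*(1+2*g) - t*w1*cv) + (1+2*g)*t*(w1*cv - (t*be - de))"
      by (simp add: algebra_simps power2_eq_square)
    also have "\<dots> = 0" using E2 E4 by simp
    finally show ?thesis by linarith
  qed
  have S3: "(1+2*g)*(1-t^2)*k = 2*g*(1+g)*t*w1"
  proof -
    have "(1+2*g)*(1-t^2)*k = a*((1+2*g)*(1-t^2)*al) + b*((1+2*g)*(1-t^2)*be)"
      unfolding k by (simp add: algebra_simps)
    also have "\<dots> = -2*g*t*w1*(a*cu + b*cv)" unfolding S1 S2 by (simp add: algebra_simps)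
    also have "\<dots> = 2*g*(1+g)*t*w1" unfolding s by (simp add: algebra_simps)
    finally show ?thesis .
  qed
  have S4: "-(1+2*g)*w1 = 2*t*k"
  proof -
    have z1: "ga - (t*al - w1*cu) = 0" "de - (t*be - w1*cv) = 0" "w1 - (2*a*ga + 2*b*de) = 0" using E1 E2 w by linarith+
    have "w1 - (2*a*(t*al - w1*cu) + 2*b*(t*be - w1*cv)) = (w1 - (2*a*ga + 2*b*de)) + 2*a*(ga - (t*al - w1*cu)) + 2*b*(de - (t*be - w1*cv))"
      by (simp add: algebra_simps)
    hence "w1 = 2*a*(t*al - w1*cu) + 2*b*(t*be - w1*cv)" unfolding z1 by simp
    also have "\<dots> = 2*t*k - 2*w1*(a*cu + b*cv)" unfolding k by (simp add: algebra_simps)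
    finally have "w1 = 2*t*k + 2*w1*(1+g)" unfolding s by (simp add: algebra_simps)
    thus ?thesis by (simp add: algebra_simps)
  qed
  have "(1+2*g)^2*(1-t^2)*k = (1+2*g)*((1+2*g)*(1-t^2)*k)" by (simp add: power2_eq_square)
  also have "\<dots> = 2*g*(1+g)*t*((1+2*g)*w1)" unfolding S3 by (simp add: algebra_simps)
  also have "(1+2*g)*w1 = -2*t*k" using S4 by linarith
  finally have "(1+2*g)^2*(1-t^2)*k = (-4*g*(1+g)*t^2)*k" by (simp add: algebra_simps power2_eq_square)
  moreover have k0: "k \<noteq> 0" using k1 by simp
  ultimately have S6: "(1+2*g)^2*(1-t^2) = -4*g*(1+g)*t^2" by (simp only: mult_right_cancel[OF k0])
  have "t^2 = (1+2*g)^2"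
  proof -
    have "(1+2*g)^2 - t^2 = (1+2*g)^2*(1-t^2) + 4*g*(1+g)*t^2" by (simp add: algebra_simps power2_eq_square)
    thus ?thesis using S6 by simp
  qed
  hence "t = 1+2*g \<or> t = -(1+2*g)" by (simp only: power2_eq_iff)
  thus tG: "t = -(1+2*g)" using tle gp by linarith
  have t0: "t*(1+t) \<noteq> 0" using tle tne by simp
  have "t*(1+t)*(ga - al) = ((al - t*ga)*(1+2*g) - t*w1*cu) + t*(w1*cu - (t*al - ga))"
    unfolding tG by (simp add: algebra_simps power2_eq_square)
  also have "\<dots> = 0" using E1 E3 by simp
  finally show "ga = al" using t0 by simp
  have "t*(1+t)*(de - be) = ((be - t*de)*(1+2*g) - t*w1*cv) + t*(w1*cv - (t*be - de))"
    unfolding tG by (simp add: algebra_simps power2_eq_square)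
  also have "\<dots> = 0" using E2 E4 by simp
  finally show "de = be" using t0 by simp
qed

locale cfg =
  fixes A B C D M :: pt and a b :: real
  assumes hA: "A \<in> hplane" and hB: "B \<in> hplane" and hC: "C \<in> hplane" and hD: "D \<in> hplane"
    and hM: "M \<in> hplane"
    and AB: "mink A B = -(a*b)" and AM: "mink A M = -a" and BM: "mink B M = -b"
    and a1: "a > 1" and b1: "b > 1"
    and Cdef: "C = (2*a) *\<^sub>R M - A" and Ddef: "D = (2*b) *\<^sub>R M - B"
begin

lemma gram[simp]: "mink A A = -1" "mink B B = -1" "mink M M = -1"
  "mink A B = -(a*b)" "mink B A = -(a*b)" "mink A M = -a" "mink M A = -a"
  "mink B M = -b" "mink M B = -b"
  using hA hB hM AB AM BM mink_sym[of A B] mink_sym[of A M] mink_sym[of B M]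
  by (auto simp: hplane_def)

definition V :: "real \<Rightarrow> real \<Rightarrow> real \<Rightarrow> pt" where
  "V x y z = x *\<^sub>R A + y *\<^sub>R B + z *\<^sub>R M"

lemma mink_V: "mink (V x y z) (V x' y' z') =
   - x*x' - y*y' - z*z' - a*b*(x*y' + y*x') - a*(x*z' + z*x') - b*(y*z' + z*y')"
  unfolding V_def by (simp add: algebra_simps)

lemma C_V: "C = V (-1) 0 (2*a)" and D_V: "D = V 0 (-1) (2*b)"
  unfolding V_def Cdef Ddef by (simp_all add: algebra_simps)

lemma mink_VA: "mink (V x y z) A = -x - a*b*y - a*z"
  and mink_VB: "mink (V x y z) B = -a*b*x - y - b*z"
  and mink_VM: "mink (V x y z) M = -a*x - b*y - z"
  unfolding V_def by (simp_all add: algebra_simps)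

lemma mink_VC: "mink (V x y z) C = x + a*b*y + a*z + 2*a*(-a*x - b*y - z)"
  and mink_VD: "mink (V x y z) D = a*b*x + y + b*z + 2*b*(-a*x - b*y - z)"
  unfolding Cdef Ddef V_def by (simp_all add: algebra_simps)

lemma V_add: "V x y z + V x' y' z' = V (x+x') (y+y') (z+z')"
  unfolding V_def by (simp add: algebra_simps)
lemma V_scale: "c *\<^sub>R V x y z = V (c*x) (c*y) (c*z)"
  unfolding V_def by (simp add: algebra_simps)

definition cu where "cu = a*(b^2-1)/(1-(a*b)^2)"
definition cv where "cv = b*(a^2-1)/(1-(a*b)^2)"
definition g where "g = -1 - cu*a - cv*b"

lemma den: "(a*b)^2 > 1"
proof -
  have "1*1 < a*b" using a1 b1 by (intro mult_strict_mono) auto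
  thus ?thesis using one_less_power[of "a*b" 2] by simp
qed

lemma dnz: "1 - (a*b)^2 \<noteq> 0" using den by simp

lemma cuD: "cu * (1-(a*b)^2) = a*(b^2-1)" unfolding cu_def using dnz by simp
lemma cvD: "cv * (1-(a*b)^2) = b*(a^2-1)" unfolding cv_def using dnz by simp

lemma F1: "cu + a*b*cv = -a" and F2: "a*b*cu + cv = -b"
proof -
  have "(cu + a*b*cv - (-a)) * (1-(a*b)^2) = 0" using cuD cvD by algebra
  thus "cu + a*b*cv = -a" using dnz by simp
  have "(a*b*cu + cv - (-b)) * (1-(a*b)^2) = 0" using cuD cvD by algebra
  thus "a*b*cu + cv = -b" using dnz by simp
qed

lemma u_neg: "cu < 0" and v_neg: "cv < 0"
proof -
  have "a^2 > 1" "b^2 > 1" using a1 b1 by (auto simp: one_less_power)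
  hence "a*(b^2-1) > 0" "b*(a^2-1) > 0" "1 - (a*b)^2 < 0" using a1 b1 den by auto
  thus "cu < 0" "cv < 0" unfolding cu_def cv_def by (simp_all add: divide_pos_neg)
qed

lemma g_val: "g = (a^2-1)*(b^2-1)/((a*b)^2-1)"
proof -
  have "g * ((a*b)^2-1) = (a^2-1)*(b^2-1)" unfolding g_def using cuD cvD by algebra
  moreover have "(a*b)^2-1 \<noteq> 0" using den by simp
  ultimately show ?thesis by (simp add: field_simps)
qed

lemma g_pos: "g > 0"
proof -
  have "a^2 > 1" "b^2 > 1" using a1 b1 by (auto simp: one_less_power)
  thus ?thesis using den g_val by simp
qed

lemma test1: "mink (V (-cu) (-cv) 0) (V (-cu) (-cv) 0) = -(1+g)"
  unfolding mink_V g_def using F1 F2 by algebra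

lemma perpAB:
  assumes "mink (V x y z) A = 0" "mink (V x y z) B = 0"
  shows "x = z*cu" "y = z*cv"
proof -
  have e1: "x + a*b*y + a*z = 0" and e2: "a*b*x + y + b*z = 0"
    using assms unfolding mink_VA mink_VB by (simp_all add: algebra_simps)
  have "(1 - (a*b)^2) * (x - z*cu) = 0" using e1 e2 F1 F2 by algebra
  thus "x = z*cu" using den by simp
  have "(1 - (a*b)^2) * (y - z*cv) = 0" using e1 e2 F1 F2 by algebra
  thus "y = z*cv" using den by simp
qed

lemma perpCD:
  assumes "mink (V x y z) C = 0" "mink (V x y z) D = 0"
  shows "x*(1+2*g) = z*cu" "y*(1+2*g) = z*cv"
proof -
  define m where "m = mink (V x y z) M"
  have "mink (V x y (z + 2*m)) A = 0" "mink (V x y (z + 2*m)) B = 0"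
    using assms unfolding m_def mink_VC mink_VD mink_VA mink_VB mink_VM V_add by (simp_all add: algebra_simps)
  hence ex: "x = (z+2*m)*cu" and ey: "y = (z+2*m)*cv" using perpAB by blast+
  have mm: "m = -a*x - b*y - z" unfolding m_def mink_VM by simp
  have "m*(1+2*g) = -z*g" using ex ey mm unfolding g_def by algebra
  thus "x*(1+2*g) = z*cu" using ex by algebra
  show "y*(1+2*g) = z*cv" using ex ey \<open>m*(1+2*g) = -z*g\<close> by algebra
qed


lemma k_ge: assumes "P \<in> hplane" "P = V al be 0" shows "a*al + b*be \<ge> 1"
proof -
  have "mink P M \<le> -1" using hplane_rcs[OF assms(1) hM] .
  thus ?thesis using assms(2) mink_VM[of al be 0] by simp
qed

lemma uniq:
  assumes cp: "common_perp A B C D P Q"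
  shows "M \<in> hline P Q \<and> - mink P Q = 1 + 2*g"
proof -
  have hQ: "Q \<in> hplane" and PQ: "P \<noteq> Q" and pa: "perp_at P Q A B" and pc: "perp_at Q P C D"
    using cp unfolding common_perp_def by auto
  have "P \<in> hline A B" using pa unfolding perp_at_def by auto
  then obtain al be where hP: "P \<in> hplane" and Pe: "P = al *\<^sub>R A + be *\<^sub>R B"
    unfolding hline_def by auto
  have PV: "P = V al be 0" unfolding Pe V_def by simp
  have "Q \<in> hline C D" using pc unfolding perp_at_def by auto
  then obtain ga de where Qe: "Q = ga *\<^sub>R C + de *\<^sub>R D"
    unfolding hline_def by auto
  define w1 where "w1 = 2*a*ga + 2*b*de"
  have QV: "Q = V (-ga) (-de) w1" unfolding Qe C_V D_V V_scale V_add w1_def by (simp add: algebra_simps)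
  define t where "t = mink P Q"
  have tle: "t \<le> -1" unfolding t_def using hplane_rcs[OF hP hQ] .
  have tne: "t \<noteq> -1" unfolding t_def using hplane_eq[OF hP hQ] PQ by auto
  have k1: "a*al + b*be \<ge> 1" using k_ge[OF hP PV] .
  have "tangent P Q = Q + t *\<^sub>R P" unfolding tangent_def t_def ..
  also have "\<dots> = V (t*al - ga) (t*be - de) w1" unfolding PV QV V_scale V_add by (simp add: algebra_simps)
  finally have T1: "tangent P Q = V (t*al - ga) (t*be - de) w1" .
  have "tangent Q P = P + t *\<^sub>R Q" unfolding tangent_def t_def mink_sym[of Q P] ..
  also have "\<dots> = V (al - t*ga) (be - t*de) (t*w1)" unfolding PV QV V_scale V_add by (simp add: algebra_simps)
  finally have T2: "tangent Q P = V (al - t*ga) (be - t*de) (t*w1)" .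
  have "mink (tangent P Q) A = 0" "mink (tangent P Q) B = 0" using perp_at_D[OF pa hA hB] by auto
  hence E1: "t*al - ga = w1*cu" and E2: "t*be - de = w1*cv" unfolding T1 using perpAB by blast+
  have "mink (tangent Q P) C = 0" "mink (tangent Q P) D = 0" using perp_at_D[OF pc hC hD] by auto
  hence E3: "(al - t*ga)*(1+2*g) = t*w1*cu" and E4: "(be - t*de)*(1+2*g) = t*w1*cv"
    unfolding T2 using perpCD by blast+
  define k where "k = a*al + b*be"
  have s: "a*cu + b*cv = -1 - g" unfolding g_def by simp
  have tG: "t = -(1+2*g)" and ga: "ga = al" and de: "de = be"
    using uniq_alg[OF E1 E2 E3 E4 s w1_def k_def tle tne _ g_pos] k1 unfolding k_def by auto
  have "(1/(2*k)) *\<^sub>R P + (1/(2*k)) *\<^sub>R Q = M"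
    unfolding PV QV V_scale V_add ga de w1_def using k1 unfolding k_def
    by (simp add: V_def field_simps)
  hence "M \<in> hline P Q" using hM unfolding hline_def by blast
  thus ?thesis using tG unfolding t_def by simp
qed


lemma fst_V: "fst (V x y z) = x * fst A + y * fst B + z * fst M"
  unfolding V_def by simp

lemma exist: "\<exists>P Q. common_perp A B C D P Q"
proof -
  define r where "r = sqrt (1+g)"
  define ir where "ir = 1/r"
  have "r > 0" unfolding r_def using g_pos by simp
  have rr: "r*r = 1+g" unfolding r_def using g_pos by simp
  have ir: "ir*ir*(1+g) = 1" unfolding ir_def using rr \<open>r>0\<close> g_pos by (simp add: field_simps)
  have irp: "ir > 0" unfolding ir_def using \<open>r>0\<close> by simp
  define P0 where "P0 = V (-cu) (-cv) 0"
  define Q0 where "Q0 = V cu cv (-2*(a*cu+b*cv))"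
  have gd: "g = -1 - cu*a - cv*b" by (rule g_def)
  have m1: "mink P0 P0 = -(1+g)" unfolding P0_def mink_V using F1 F2 gd by algebra
  have m2: "mink Q0 Q0 = -(1+g)" unfolding Q0_def mink_V using F1 F2 gd by algebra
  have m3: "mink P0 Q0 = -(1+g)*(1+2*g)" unfolding P0_def Q0_def mink_V using F1 F2 gd by algebra
  have m4: "mink P0 A = -a" unfolding P0_def mink_VA using F1 F2 gd by algebra
  have m5: "mink P0 B = -b" unfolding P0_def mink_VB using F1 F2 gd by algebra
  have m6: "mink Q0 A = -a*(1+2*g)" unfolding Q0_def mink_VA using F1 F2 gd by algebra
  have m7: "mink Q0 B = -b*(1+2*g)" unfolding Q0_def mink_VB using F1 F2 gd by algebra
  have m8: "mink P0 C = -a*(1+2*g)" unfolding P0_def mink_VC using F1 F2 gd by algebra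
  have m9: "mink P0 D = -b*(1+2*g)" unfolding P0_def mink_VD using F1 F2 gd by algebra
  have m10: "mink Q0 C = -a" unfolding Q0_def mink_VC using F1 F2 gd by algebra
  have m11: "mink Q0 D = -b" unfolding Q0_def mink_VD using F1 F2 gd by algebra
  define P where "P = ir *\<^sub>R P0"
  define Q where "Q = ir *\<^sub>R Q0"
  have PAB: "P = (-cu*ir) *\<^sub>R A + (-cv*ir) *\<^sub>R B" unfolding P_def P0_def V_def by (simp add: algebra_simps)
  have Q0CD: "Q0 = (-cu) *\<^sub>R C + (-cv) *\<^sub>R D" unfolding Q0_def C_V D_V V_scale V_add by (simp add: algebra_simps)
  have QCD: "Q = (-cu*ir) *\<^sub>R C + (-cv*ir) *\<^sub>R D" unfolding Q_def Q0CD by (simp add: algebra_simps)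
  have fA: "fst A > 0" and fB: "fst B > 0" and fC: "fst C > 0" and fD: "fst D > 0"
    using hA hB hC hD unfolding hplane_def by auto
  have "fst P = (-cu*ir) * fst A + (-cv*ir) * fst B" unfolding PAB by simp
  moreover have "(-cu*ir) * fst A > 0" "(-cv*ir) * fst B > 0" using u_neg v_neg irp fA fB by (intro mult_pos_pos; simp)+
  ultimately have fP: "fst P > 0" by linarith
  have "fst Q = (-cu*ir) * fst C + (-cv*ir) * fst D" unfolding QCD by simp
  moreover have "(-cu*ir) * fst C > 0" "(-cv*ir) * fst D > 0" using u_neg v_neg irp fC fD by (intro mult_pos_pos; simp)+
  ultimately have fQ: "fst Q > 0" by linarith
  have "mink P P = -(ir*ir*(1+g))" unfolding P_def by (simp add: m1 algebra_simps)
  hence PP: "mink P P = -1" using ir by simp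
  have "mink Q Q = -(ir*ir*(1+g))" unfolding Q_def by (simp add: m2 algebra_simps)
  hence QQ: "mink Q Q = -1" using ir by simp
  have "mink P Q = -(ir*ir*(1+g))*(1+2*g)" unfolding P_def Q_def by (simp add: m3 algebra_simps)
  hence PQ: "mink P Q = -(1+2*g)" using ir by simp
  have hP: "P \<in> hplane" using PP fP unfolding hplane_def by simp
  have hQ: "Q \<in> hplane" using QQ fQ unfolding hplane_def by simp
  have P_l: "P \<in> hline A B" using hP PAB unfolding hline_def by blast
  have Q_l: "Q \<in> hline C D" using hQ QCD unfolding hline_def by blast
  have neq: "P \<noteq> Q" using PP PQ g_pos by auto
  have "mink (tangent P Q) A = 0" "mink (tangent P Q) B = 0"
    unfolding tangent_def PQ unfolding P_def Q_def by (simp_all add: m4 m5 m6 m7 algebra_simps)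
  hence pa: "perp_at P Q A B" using perp_at_intro[OF P_l] by blast
  have QP: "mink Q P = -(1+2*g)" using PQ mink_sym[of Q P] by simp
  have "mink (tangent Q P) C = 0" "mink (tangent Q P) D = 0"
    unfolding tangent_def QP unfolding P_def Q_def by (simp_all add: m8 m9 m10 m11 algebra_simps)
  hence pc: "perp_at Q P C D" using perp_at_intro[OF Q_l] by blast
  show ?thesis using hQ neq pa pc unfolding common_perp_def by blast
qed

end


lemma tangent_mink: "A \<in> hplane \<Longrightarrow>
  mink (tangent A X) (tangent A Y) = mink X Y + mink A X * mink A Y"
  unfolding tangent_def hplane_def by (simp add: mink_sym[of X A] mink_sym[of Y A] algebra_simps)

lemma cosh_hdist: "X \<in> hplane \<Longrightarrow> Y \<in> hplane \<Longrightarrow> cosh (hdist X Y) = - mink X Y"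
  unfolding hdist_def using hplane_rcs[of X Y] by simp

lemma cos_sum: "cos (pi/4 - e) + cos (pi/4 + e) = sqrt 2 * cos e"
  by (simp add: cos_diff cos_add cos_45)

theorem lemma3p2:
  fixes \<epsilon> :: real and A B C D M :: pt
  assumes "0 \<le> \<epsilon>" and "\<epsilon> < pi / 4"
    and "convex_quad A B C D"
    and "hdist A B = hdist B C" and "hdist B C = hdist C D" and "hdist C D = hdist D A"
    and "hangle A D B = pi / 4 - \<epsilon>" and "hangle B A C = pi / 4 + \<epsilon>"
    and "hangle C B D = pi / 4 - \<epsilon>" and "hangle D C A = pi / 4 + \<epsilon>"
    and "M \<in> hseg A C" and "M \<in> hseg B D"
  shows "(\<exists>P Q. common_perp A B C D P Q) \<and>
         (\<forall>P Q. common_perp A B C D P Q \<longrightarrow>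
             M \<in> hline P Q \<and> cosh (hdist P Q) = sqrt 2 * cos \<epsilon> + 1) \<and>
         (\<exists>P Q. common_perp B C D A P Q) \<and>
         (\<forall>P Q. common_perp B C D A P Q \<longrightarrow>
             M \<in> hline P Q \<and> cosh (hdist P Q) = sqrt 2 * cos \<epsilon> + 1)"
proof -
  have n1: "noncollinear A B C" and n3: "noncollinear C D A" and n4: "noncollinear D A B"
    using assms(3) unfolding convex_quad_def by auto
  have hA: "A \<in> hplane" and hB: "B \<in> hplane" and hC: "C \<in> hplane" and hD: "D \<in> hplane"
    using n1 n3 unfolding noncollinear_def by auto
  have AC: "A \<noteq> C"
  proof
    assume "A = C"
    hence "A = 1 *\<^sub>R C + 0 *\<^sub>R D" by simp
    hence "A \<in> hline C D" using hA unfolding hline_def by blast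
    thus False using n3 unfolding noncollinear_def by blast
  qed
  have BD: "B \<noteq> D"
  proof
    assume "B = D"
    hence "B = 1 *\<^sub>R D + 0 *\<^sub>R A" by simp
    hence "B \<in> hline D A" using hB unfolding hline_def by blast
    thus False using n4 unfolding noncollinear_def by blast
  qed
  obtain a1 b1 where hM: "M \<in> hplane" and M1: "M = a1 *\<^sub>R A + b1 *\<^sub>R C"
    using assms(11) unfolding hseg_def by auto
  obtain a2 b2 where M2: "M = a2 *\<^sub>R B + b2 *\<^sub>R D"
    using assms(12) unfolding hseg_def by auto
  define c where "c = - mink A B"
  have eAB: "mink A B = -c" unfolding c_def by simp
  have eBC: "mink B C = -c" using assms(4) cosh_hdist[OF hA hB] cosh_hdist[OF hB hC] unfolding c_def by simp
  have eCD: "mink C D = -c" using assms(4,5) cosh_hdist[OF hA hB] cosh_hdist[OF hC hD] unfolding c_def by simp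
  have eDA: "mink D A = -c" using assms(4,5,6) cosh_hdist[OF hA hB] cosh_hdist[OF hD hA] unfolding c_def by simp
  define p where "p = - mink A C"
  define q where "q = - mink B D"
  have p1: "p \<noteq> 1" using hplane_eq[OF hA hC] AC unfolding p_def by auto
  have q1: "q \<noteq> 1" using hplane_eq[OF hB hD] BD unfolding q_def by auto
  have AA: "mink A A = -1" and BB: "mink B B = -1" and CC: "mink C C = -1" and DD: "mink D D = -1"
    and MM: "mink M M = -1"
    using hA hB hC hD hM unfolding hplane_def by auto
  have "mink M A = -c*(a2+b2)" unfolding M2 using eAB eDA mink_sym[of B A] by (simp add: algebra_simps)
  moreover have "mink M C = -c*(a2+b2)" unfolding M2 using eBC eCD mink_sym[of D C] by (simp add: algebra_simps)
  moreover have "mink M A = -a1 - b1*p" unfolding M1 p_def using AA mink_sym[of C A] by simp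
  moreover have "mink M C = -a1*p - b1" unfolding M1 p_def using CC by simp
  ultimately have "(a1 - b1)*(p - 1) = 0" by (simp add: algebra_simps)
  hence ab1: "b1 = a1" using p1 by simp
  have "mink M B = -c*(a1+b1)" unfolding M1 using eAB eBC mink_sym[of C B] by (simp add: algebra_simps)
  moreover have "mink M D = -c*(a1+b1)" unfolding M1 using eDA eCD mink_sym[of D A] by (simp add: algebra_simps)
  moreover have "mink M B = -a2 - b2*q" unfolding M2 q_def using BB mink_sym[of D B] by simp
  moreover have "mink M D = -a2*q - b2" unfolding M2 q_def using DD by simp
  ultimately have "(a2 - b2)*(q - 1) = 0" by (simp add: algebra_simps)
  hence ab2: "b2 = a2" using q1 by simp
  have a1nz: "a1 \<noteq> 0" using MM unfolding M1 ab1 by auto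
  have a2nz: "a2 \<noteq> 0" using MM unfolding M2 ab2 by auto
  define ma where "ma = - mink A M"
  define mb where "mb = - mink B M"
  have C1: "C = (1/a1) *\<^sub>R M - A" unfolding M1 ab1 using a1nz by (simp add: scaleR_add_right)
  have D1: "D = (1/a2) *\<^sub>R M - B" unfolding M2 ab2 using a2nz by (simp add: scaleR_add_right)
  have "mink C C = - ((1/a1)*(1/a1)) + 2*(1/a1)*ma - 1"
    unfolding ma_def using MM AA mink_sym[of M A] by (subst C1, subst C1) (simp add: power2_eq_square algebra_simps)
  hence "(1/a1)*(2*ma - 1/a1) = 0" using CC by (simp add: algebra_simps power2_eq_square)
  hence "1/a1 = 2*ma" using a1nz by simp
  hence Cdef: "C = (2*ma) *\<^sub>R M - A" using C1 by simp
  have "mink D D = - ((1/a2)*(1/a2)) + 2*(1/a2)*mb - 1"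
    unfolding mb_def using MM BB mink_sym[of M B] by (subst D1, subst D1) (simp add: power2_eq_square algebra_simps)
  hence "(1/a2)*(2*mb - 1/a2) = 0" using DD by (simp add: algebra_simps power2_eq_square)
  hence "1/a2 = 2*mb" using a2nz by simp
  hence Ddef: "D = (2*mb) *\<^sub>R M - B" using D1 by simp
  have "mink B C = -2*ma*mb + c" unfolding Cdef mb_def using eAB mink_sym[of B A] by simp
  hence cab: "c = ma*mb" using eBC by simp
  have AM: "A \<noteq> M"
  proof
    assume "A = M"
    hence "B = (-1) *\<^sub>R D + (1/a2) *\<^sub>R A" using M2 ab2 a2nz by (simp add: scaleR_add_right)
    hence "B \<in> hline D A" using hB unfolding hline_def by blast
    thus False using n4 unfolding noncollinear_def by blast
  qed
  have BM: "B \<noteq> M"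
  proof
    assume "B = M"
    hence "C = (-1) *\<^sub>R A + (1/a1) *\<^sub>R B" using M1 ab1 a1nz by (simp add: scaleR_add_right)
    hence "C \<in> hline A B" using hC unfolding hline_def by blast
    thus False using n1 unfolding noncollinear_def by blast
  qed
  have ma1: "ma > 1"
  proof -
    have "ma \<ge> 1" unfolding ma_def using hplane_rcs[OF hA hM] by simp
    moreover have "ma \<noteq> 1" unfolding ma_def using hplane_eq[OF hA hM] AM by auto
    ultimately show ?thesis by simp
  qed
  have mb1: "mb > 1"
  proof -
    have "mb \<ge> 1" unfolding mb_def using hplane_rcs[OF hB hM] by simp
    moreover have "mb \<noteq> 1" unfolding mb_def using hplane_eq[OF hB hM] BM by auto
    ultimately show ?thesis by simp
  qed
  have AMe: "mink A M = -ma" unfolding ma_def by simp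
  have BMe: "mink B M = -mb" unfolding mb_def by simp
  have ABe: "mink A B = -(ma*mb)" using eAB cab by simp
  have BCe: "mink B C = -(mb*ma)" using eBC cab by simp
  have CM: "mink C M = -ma" unfolding Cdef using MM AMe by simp
  have Acd: "A = (2*ma) *\<^sub>R M - C" unfolding Cdef by simp
  have cf1: "cfg A B C D M ma mb" unfolding cfg_def
    by (intro conjI hA hB hC hD hM ABe AMe BMe ma1 mb1 Cdef Ddef)
  have cf2: "cfg B C D A M mb ma" unfolding cfg_def
    by (intro conjI hA hB hC hD hM BCe BMe CM ma1 mb1 Ddef Acd)
  interpret c1: cfg A B C D M ma mb by (rule cf1)
  interpret c2: cfg B C D A M mb ma by (rule cf2)
  define X where "X = ma^2"
  define Y where "Y = mb^2"
  have X1: "X > 1" and Y1: "Y > 1" unfolding X_def Y_def using ma1 mb1 by (simp_all add: one_less_power)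
  have c2: "c^2 = X*Y" unfolding cab X_def Y_def by (simp add: power_mult_distrib)
  have "1*1 < X*Y" using X1 Y1 by (intro mult_strict_mono) auto
  hence XY: "X*Y - 1 > 0" by simp
  have DB: "mink D B = 1 - 2*Y" unfolding Ddef Y_def mb_def using BB by (simp add: power2_eq_square)
  have AC2: "mink A C = 1 - 2*X" unfolding Cdef X_def ma_def using AA by (simp add: power2_eq_square)
  define rA where "rA = (X*Y - 2*Y + 1)/(X*Y - 1)"
  define rB where "rB = (X*Y - 2*X + 1)/(X*Y - 1)"
  have nAD: "mink (tangent A D) (tangent A D) = X*Y - 1"
    using tangent_mink[OF hA, of D D] DD eDA mink_sym[of A D] c2 by (simp add: power2_eq_square)
  have nAB: "mink (tangent A B) (tangent A B) = X*Y - 1"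
    using tangent_mink[OF hA, of B B] BB eAB c2 by (simp add: power2_eq_square)
  have iA: "mink (tangent A D) (tangent A B) = X*Y - 2*Y + 1"
    using tangent_mink[OF hA, of D B] DB eDA eAB mink_sym[of A D] c2 by (simp add: power2_eq_square)
  have nBA: "mink (tangent B A) (tangent B A) = X*Y - 1"
    using tangent_mink[OF hB, of A A] AA eAB mink_sym[of B A] c2 by (simp add: power2_eq_square)
  have nBC: "mink (tangent B C) (tangent B C) = X*Y - 1"
    using tangent_mink[OF hB, of C C] CC eBC c2 by (simp add: power2_eq_square)
  have iB: "mink (tangent B A) (tangent B C) = X*Y - 2*X + 1"
    using tangent_mink[OF hB, of A C] AC2 eAB eBC mink_sym[of B A] c2 by (simp add: power2_eq_square)
  have sq: "sqrt (X*Y - 1) * sqrt (X*Y - 1) = X*Y - 1" using XY by simp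
  have hA': "hangle A D B = arccos rA" unfolding hangle_def nAD nAB iA sq rA_def ..
  have hB': "hangle B A C = arccos rB" unfolding hangle_def nBA nBC iB sq rB_def ..
  have "Y*(X-1) \<ge> 0" "X*(Y-1) \<ge> 0" using X1 Y1 by simp_all
  hence n1: "-(X*Y-1) \<le> X*Y - 2*Y + 1" and n2: "-(X*Y-1) \<le> X*Y - 2*X + 1"
    by (simp_all add: algebra_simps)
  have d0: "X*Y - 1 > 0" by (rule XY)
  have "-1 \<le> rA" unfolding rA_def using n1 by (subst pos_le_divide_eq[OF d0]) simp
  moreover have "rA \<le> 1" unfolding rA_def using Y1 by (subst pos_divide_le_eq[OF d0]) simp
  ultimately have rA1: "-1 \<le> rA \<and> rA \<le> 1" by simp
  have "-1 \<le> rB" unfolding rB_def using n2 by (subst pos_le_divide_eq[OF d0]) simp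
  moreover have "rB \<le> 1" unfolding rB_def using X1 by (subst pos_divide_le_eq[OF d0]) simp
  ultimately have rB1: "-1 \<le> rB \<and> rB \<le> 1" by simp
  have cA: "rA = cos (pi/4 - \<epsilon>)" using assms(7) hA' rA1 cos_arccos by metis
  have cB: "rB = cos (pi/4 + \<epsilon>)" using assms(8) hB' rB1 cos_arccos by metis
  have gv: "c1.g = (X-1)*(Y-1)/(X*Y-1)" unfolding c1.g_val X_def Y_def by (simp add: power_mult_distrib)
  have gv2: "c2.g = (X-1)*(Y-1)/(X*Y-1)" unfolding c2.g_val X_def Y_def by (simp add: power_mult_distrib algebra_simps)
  have "rA + rB = ((X*Y - 2*Y + 1) + (X*Y - 2*X + 1))/(X*Y-1)" unfolding rA_def rB_def by (rule add_divide_distrib[symmetric])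
  also have "(X*Y - 2*Y + 1) + (X*Y - 2*X + 1) = 2*((X-1)*(Y-1))" by (simp add: algebra_simps)
  finally have "rA + rB = 2*((X-1)*(Y-1)/(X*Y-1))" by simp
  hence val: "1 + 2*((X-1)*(Y-1)/(X*Y-1)) = sqrt 2 * cos \<epsilon> + 1" using cA cB cos_sum by simp
  have gpos: "(X-1)*(Y-1)/(X*Y-1) > 0" using X1 Y1 XY by simp
  have U1: "\<forall>P Q. common_perp A B C D P Q \<longrightarrow> M \<in> hline P Q \<and> cosh (hdist P Q) = sqrt 2 * cos \<epsilon> + 1"
  proof (intro allI impI)
    fix P Q assume cp: "common_perp A B C D P Q"
    have hP: "P \<in> hplane" and hQ: "Q \<in> hplane" using cp unfolding common_perp_def perp_at_def hline_def by auto
    show "M \<in> hline P Q \<and> cosh (hdist P Q) = sqrt 2 * cos \<epsilon> + 1"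
      using c1.uniq[OF cp] cosh_hdist[OF hP hQ] gv val by simp
  qed
  have U2: "\<forall>P Q. common_perp B C D A P Q \<longrightarrow> M \<in> hline P Q \<and> cosh (hdist P Q) = sqrt 2 * cos \<epsilon> + 1"
  proof (intro allI impI)
    fix P Q assume cp: "common_perp B C D A P Q"
    have hP: "P \<in> hplane" and hQ: "Q \<in> hplane" using cp unfolding common_perp_def perp_at_def hline_def by auto
    show "M \<in> hline P Q \<and> cosh (hdist P Q) = sqrt 2 * cos \<epsilon> + 1"
      using c2.uniq[OF cp] cosh_hdist[OF hP hQ] gv2 val by simp
  qed
  show ?thesis using c1.exist c2.exist U1 U2 by blast
qed

end
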